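(* There is a constant $c>0$ such that for every sufficiently large $n$ for which $\sqrt{n}$ is an odd integer, every deterministic $\mathsf{Online}$-$\mathsf{LOCAL}$ algorithm that properly 3-colors every $(\sqrt{n}\times\sqrt{n})$ toroidal grid has locality at least $c\sqrt{n}$, and the same holds for $(\sqrt{n}\times\sqrt{n})$ cylindrical grids. That is, the locality of 3-coloring $(\sqrt{n}\times\sqrt{n})$ toroidal and cylindrical grids in $\mathsf{Online}$-$\mathsf{LOCAL}$ is $\Omega(\sqrt{n})$.
   Context: For a graph $G=(V,E)$, $U\subseteq V$ and an integer $T\ge 0$, $\mathcal{B}(U,T)$ denotes the set of nodes at distance at most $T$ from some node of $U$, and $G[U]$ denotes the induced subgraph. The $\mathsf{Online}$-$\mathsf{LOCAL}$ model: an algorithm with locality $T=T(n)$ is deterministic and knows $n$. The adversary chooses an $n$-node input graph $G=(V,E)$ from the input family, assigns distinct identifiers from $\{1,\dots,\mathrm{poly}(n)\}$ to its nodes, and chooses an ordering $\sigma=(v_1,\dots,v_n)$ of $V$. For $i=1,\dots,n$, when $v_i$ is presented, the algorithm must irrevocably assign an output (here a color) to $v_i$ as a function of the sequence $(v_1,\dots,v_i)$ and the induced subgraph $G_i=G\big[\bigcup_{j\le i}\mathcal{B}(v_j,T)\big]$ (with identifiers); thus the algorithm has global memory of everything seen so far. The algorithm solves a coloring problem on an input family if for every choice of the adversary the final coloring is proper and uses only the allowed colors. The locality of a problem is the minimum locality of an algorithm solving it. An $(a\times b)$ simple grid has node set $\{(i,j): i\in[a], j\in[b]\}$, with $(i,j)$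 and $(i',j')$ adjacent iff $|i-i'|+|j-j'|=1$. An $(a\times b)$ cylindrical grid is obtained from it by adding the edges $\{(i,1),(i,b)\}$ for all $i\in[a]$. An $(a\times b)$ toroidal grid is obtained from the cylindrical grid by further adding the edges $\{(1,j),(a,j)\}$ for all $j\in[b]$. *)

theory Defs
  imports Complex_Main
begin

definition grid_nodes :: "nat \<Rightarrow> (nat \<times> nat) set" where
  "grid_nodes k = {(i, j). i < k \<and> j < k}"

definition cyl_adj :: "nat \<Rightarrow> nat \<times> nat \<Rightarrow> nat \<times> nat \<Rightarrow> bool" where
  "cyl_adj k p q \<longleftrightarrow> p \<in> grid_nodes k \<and> q \<in> grid_nodes k \<and> p \<noteq> q \<and>
     ((fst p = fst q \<and> (snd q = (snd p + 1) mod k \<or> snd p = (snd q + 1) mod k)) \<or>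
      (snd p = snd q \<and> (fst q = fst p + 1 \<or> fst p = fst q + 1)))"

definition torus_adj :: "nat \<Rightarrow> nat \<times> nat \<Rightarrow> nat \<times> nat \<Rightarrow> bool" where
  "torus_adj k p q \<longleftrightarrow> p \<in> grid_nodes k \<and> q \<in> grid_nodes k \<and> p \<noteq> q \<and>
     ((fst p = fst q \<and> (snd q = (snd p + 1) mod k \<or> snd p = (snd q + 1) mod k)) \<or>
      (snd p = snd q \<and> (fst q = (fst p + 1) mod k \<or> fst p = (fst q + 1) mod k)))"

fun ball :: "('v \<Rightarrow> 'v \<Rightarrow> bool) \<Rightarrow> 'v \<Rightarrow> nat \<Rightarrow> 'v set" where
  "ball E v 0 = {v}"
| "ball E v (Suc t) = ball E v t \<union> {y. \<exists>x\<in>ball E v t. E x y}"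

text \<open>What the algorithm sees after nodes vs = [v_1,...,v_i] have been presented:
  the identifiers of the presented sequence, and the induced subgraph on the union
  of the T-balls around them, given in terms of identifiers.\<close>
definition view :: "('v \<Rightarrow> 'v \<Rightarrow> bool) \<Rightarrow> ('v \<Rightarrow> nat) \<Rightarrow> nat \<Rightarrow> 'v list
    \<Rightarrow> nat list \<times> nat set \<times> (nat \<times> nat) set" where
  "view E idf T vs =
     (let U = (\<Union>v\<in>set vs. ball E v T)
      in (map idf vs, idf ` U, {(idf x, idf y) | x y. x \<in> U \<and> y \<in> U \<and> E x y}))"

text \<open>A deterministic Online-LOCAL algorithm (for a fixed n) is a function from views to
  outputs.\<close>
definition online_3col_solves ::
  "'v set \<Rightarrow> ('v \<Rightarrow> 'v \<Rightarrow> bool) \<Rightarrow> nat \<Rightarrow> nat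
     \<Rightarrow> (nat list \<times> nat set \<times> (nat \<times> nat) set \<Rightarrow> nat) \<Rightarrow> bool" where
  "online_3col_solves V E N T A \<longleftrightarrow>
     (\<forall>idf \<sigma>. inj_on idf V \<and> idf ` V \<subseteq> {1..N} \<and> distinct \<sigma> \<and> set \<sigma> = V \<longrightarrow>
        (let col = (\<lambda>i. A (view E idf T (take (Suc i) \<sigma>)))
         in (\<forall>i<length \<sigma>. col i < 3) \<and>
            (\<forall>i<length \<sigma>. \<forall>j<length \<sigma>. E (\<sigma> ! i) (\<sigma> ! j) \<longrightarrow> col i \<noteq> col j)))"

end

theory Submission
  imports Defs
begin

definition dl :: "nat \<Rightarrow> nat \<Rightarrow> int" where
  "dl a b = (if b = (a+1) mod 3 then 1 else -1)"
lemma dl_tab: "dl 0 1 = 1" "dl 0 2 = -1" "dl 1 2 = 1" "dl 1 0 = -1" "dl 2 0 = 1" "dl 2 1 = -1"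
  by (simp_all add: dl_def)
lemma three_cases: "(a::nat) < 3 \<Longrightarrow> a = 0 \<or> a = 1 \<or> a = 2" by arith
lemma dl_mod: "a < 3 \<Longrightarrow> b < 3 \<Longrightarrow> a \<noteq> b \<Longrightarrow> dl a b mod 3 = (int b - int a) mod 3"
  apply (drule three_cases, drule three_cases) apply (elim disjE) by (simp_all add: dl_def)
lemma dl_anti: "a < 3 \<Longrightarrow> b < 3 \<Longrightarrow> a \<noteq> b \<Longrightarrow> dl b a = - dl a b"
  apply (drule three_cases, drule three_cases) apply (elim disjE) by (simp_all add: dl_def)
lemma dl_sq: "a < 3 \<Longrightarrow> b < 3 \<Longrightarrow> c < 3 \<Longrightarrow> e < 3 \<Longrightarrow> a \<noteq> b \<Longrightarrow> b \<noteq> e \<Longrightarrow> a \<noteq> c \<Longrightarrow> c \<noteq> e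
  \<Longrightarrow> dl a b - dl c e = dl a c - dl b e"
  apply (drule three_cases, drule three_cases, drule three_cases, drule three_cases)
  apply (elim disjE) by (simp_all add: dl_def)
lemma dl_mod2: "dl a b mod 2 = 1" by (simp add: dl_def)
definition RS :: "nat \<Rightarrow> (nat \<Rightarrow> nat) \<Rightarrow> int" where
  "RS k g = (\<Sum>j<k. dl (g j) (g ((j+1) mod k)))"

lemma sum_cyc: "0 < (k::nat) \<Longrightarrow> (\<Sum>j<k. h (Suc j mod k)) = (\<Sum>j<k. (h j :: int))"
proof -
  assume "0 < k"
  then obtain m where k: "k = Suc m" by (cases k) auto
  have "(\<Sum>j<Suc m. h ((j+1) mod Suc m)) = (\<Sum>j<m. h ((j+1) mod Suc m)) + h 0"
    by simp
  also have "(\<Sum>j<m. h ((j+1) mod Suc m)) = (\<Sum>j<m. h (Suc j))"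
    by (rule sum.cong) auto
  also have "(\<Sum>j<m. h (Suc j)) + h 0 = (\<Sum>j<Suc m. h j)"
    by (subst sum.lessThan_Suc_shift) simp
  finally show ?thesis unfolding k by simp
qed

lemma rs_mod3:
  assumes "0 < k" "\<And>j. j < k \<Longrightarrow> g j < 3" "\<And>j. j < k \<Longrightarrow> g j \<noteq> g (Suc j mod k)"
  shows "RS k g mod 3 = 0"
proof -
  have m: "(j+1) mod k < k" for j using assms(1) by simp
  have "RS k g mod 3 = (\<Sum>j<k. dl (g j) (g ((j+1) mod k)) mod 3) mod 3"
    unfolding RS_def by (simp add: mod_sum_eq)
  also have "\<dots> = (\<Sum>j<k. (int (g ((j+1) mod k)) - int (g j)) mod 3) mod 3"
  proof (rule arg_cong[where f="\<lambda>x. x mod 3"], rule sum.cong)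
    fix j assume "j \<in> {..<k}"
    then have j: "j < k" by simp
    show "dl (g j) (g ((j+1) mod k)) mod 3 = (int (g ((j+1) mod k)) - int (g j)) mod 3"
      by (rule dl_mod) (use assms(2)[OF j] assms(2)[OF m[of j]] assms(3)[OF j] in auto)
  qed simp
  also have "\<dots> = (\<Sum>j<k. (int (g ((j+1) mod k)) - int (g j))) mod 3"
    by (simp add: mod_sum_eq)
  also have "(\<Sum>j<k. (int (g ((j+1) mod k)) - int (g j))) = 0"
    by (simp add: sum_subtractf sum_cyc[OF assms(1), of "\<lambda>j. int (g j)"])
  finally show ?thesis by simp
qed

lemma rs_odd: "odd k \<Longrightarrow> RS k g mod 2 = 1"
proof -
  assume "odd k"
  have "RS k g mod 2 = (\<Sum>j<k. dl (g j) (g ((j+1) mod k)) mod 2) mod 2"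
    unfolding RS_def by (simp add: mod_sum_eq)
  also have "\<dots> = int k mod 2" by (simp add: dl_mod2)
  finally show ?thesis using \<open>odd k\<close> by presburger
qed

lemma rs_nz:
  assumes "odd k"
  shows "RS k g \<noteq> 0"
  using rs_odd[OF assms(1), of g] by auto

lemma rs_rev:
  assumes "0 < k" "\<And>j. j < k \<Longrightarrow> g j < 3" "\<And>j. j < k \<Longrightarrow> g j \<noteq> g (Suc j mod k)"
  shows "RS k (\<lambda>j. g ((k - j) mod k)) = - RS k g"
proof -
  have e1: "(k - Suc j mod k) mod k = k - Suc j" if "j < k" for j
    using that assms(1) by (cases "j + 1 = k") auto
  have e2: "(k - j) mod k = (k - Suc j + 1) mod k" if "j < k" for j
    using that assms(1) by (cases "j = 0") auto
  let ?F = "\<lambda>u. dl (g u) (g ((u+1) mod k))"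
  have "RS k (\<lambda>j. g ((k - j) mod k)) = (\<Sum>j<k. - ?F (k - Suc j))"
    unfolding RS_def
  proof (rule sum.cong)
    fix j assume "j \<in> {..<k}"
    then have j: "j < k" by simp
    have u: "k - Suc j < k" using j by simp
    have "dl (g ((k - j) mod k)) (g ((k - (j + 1) mod k) mod k))
        = dl (g ((k - Suc j + 1) mod k)) (g (k - Suc j))" by (simp add: e1[OF j] e2[OF j])
    also have "\<dots> = - ?F (k - Suc j)"
      by (rule dl_anti) (use assms u in auto)
    finally show "dl (g ((k - j) mod k)) (g ((k - (j + 1) mod k) mod k)) = - ?F (k - Suc j)" .
  qed simp
  also have "\<dots> = - (\<Sum>j<k. ?F (k - Suc j))" by (simp add: sum_negf)
  also have "(\<Sum>j<k. ?F (k - Suc j)) = (\<Sum>j<k. ?F j)" by (rule sum.nat_diff_reindex)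
  finally show ?thesis unfolding RS_def .
qed

lemma rs_rows:
  fixes f :: "nat \<times> nat \<Rightarrow> nat"
  assumes k: "0 < k" and f3: "\<And>i j. i < k \<Longrightarrow> j < k \<Longrightarrow> f (i,j) < 3"
    and fh: "\<And>i j. i < k \<Longrightarrow> j < k \<Longrightarrow> f (i,j) \<noteq> f (i, Suc j mod k)"
    and fv: "\<And>i j. i + 1 < k \<Longrightarrow> j < k \<Longrightarrow> f (i,j) \<noteq> f (i+1,j)"
  shows "i < k \<Longrightarrow> RS k (\<lambda>j. f (i,j)) = RS k (\<lambda>j. f (0,j))"
proof (induction i)
  case 0 then show ?case by simp
next
  case (Suc i)
  let ?V = "\<lambda>j. dl (f (i,j)) (f (i+1,j))"
  have "RS k (\<lambda>j. f (i,j)) - RS k (\<lambda>j. f (Suc i,j))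
      = (\<Sum>j<k. dl (f (i,j)) (f (i,(j+1) mod k)) - dl (f (i+1,j)) (f (i+1,(j+1) mod k)))"
    unfolding RS_def by (simp add: sum_subtractf)
  also have "\<dots> = (\<Sum>j<k. ?V j - ?V ((j+1) mod k))"
  proof (rule sum.cong)
    fix j assume "j \<in> {..<k}"
    then have j: "j < k" and j': "(j+1) mod k < k" using k by auto
    show "dl (f (i,j)) (f (i,(j+1) mod k)) - dl (f (i+1,j)) (f (i+1,(j+1) mod k))
        = ?V j - ?V ((j+1) mod k)"
      by (rule dl_sq) (use Suc.prems j j' f3[of i j] f3[of "Suc i" j] f3[of i "(j+1) mod k"] f3[of "Suc i" "(j+1) mod k"]
           fh[of i j] fh[of "Suc i" j] fv[of i j] fv[of i "(j+1) mod k"] in auto)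
  qed simp
  also have "\<dots> = 0" using sum_cyc[OF k, of ?V] by (simp add: sum_subtractf)
  finally show ?case using Suc by simp
qed



definition rho :: "nat \<Rightarrow> nat \<times> nat \<Rightarrow> nat \<times> nat" where
  "rho k p = (fst p, if snd p < k then (k - snd p) mod k else snd p)"

definition psi :: "nat \<Rightarrow> nat \<Rightarrow> nat \<times> nat \<Rightarrow> nat \<times> nat" where
  "psi k T p = (if 2*T+3 \<le> fst p then rho k p else p)"

lemma fst_rho[simp]: "fst (rho k p) = fst p" by (simp add: rho_def)
lemma fst_psi[simp]: "fst (psi k T p) = fst p" by (simp add: psi_def)

lemma rho_rho[simp]: "rho k (rho k p) = p"
proof (cases p)
  case (Pair a b)
  show ?thesis
  proof (cases "b < k")
    case True
    then have "(k - (k - b) mod k) mod k = b" by (cases "b = 0") auto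
    moreover have "(k - b) mod k < k" using True by simp
    ultimately show ?thesis using True Pair by (simp add: rho_def)
  qed (simp add: rho_def Pair)
qed

lemma psi_psi[simp]: "psi k T (psi k T p) = p" by (simp add: psi_def)

lemma rho_eq: "b < k \<Longrightarrow> rho k (a, b) = (a, if b = 0 then 0 else k - b)"
  by (cases "b = 0") (auto simp: rho_def)

lemma rho_out: "\<not> b < k \<Longrightarrow> rho k (a, b) = (a, b)"
  by (simp add: rho_def)

lemma smod: "x < k \<Longrightarrow> Suc x mod k = (if Suc x = k then 0 else Suc x)"
  by auto

lemma torus_rho: "torus_adj k (rho k p) (rho k q) = torus_adj k p q"
proof -
  obtain a b where p: "p = (a,b)" by fastforce
  obtain c e where q: "q = (c,e)" by fastforce
  show ?thesis
  proof (cases "b < k \<and> e < k")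
    case True
    then show ?thesis unfolding p q torus_adj_def grid_nodes_def
      by (simp add: rho_eq smod split: if_splits) (auto simp: smod split: if_splits)
  next
    case False
    then show ?thesis unfolding p q torus_adj_def grid_nodes_def
      by (auto simp: rho_def split: if_splits)
  qed
qed

lemma cyl_rho: "cyl_adj k (rho k p) (rho k q) = cyl_adj k p q"
proof -
  obtain a b where p: "p = (a,b)" by fastforce
  obtain c e where q: "q = (c,e)" by fastforce
  show ?thesis
  proof (cases "b < k \<and> e < k")
    case True
    then show ?thesis unfolding p q cyl_adj_def grid_nodes_def
      by (simp add: rho_eq smod split: if_splits) (auto simp: smod split: if_splits)
  next
    case False
    then show ?thesis unfolding p q cyl_adj_def grid_nodes_def
      by (auto simp: rho_def split: if_splits)
  qed
qed

lemma torus_rows: "torus_adj k p q \<Longrightarrow> 1 \<le> fst p \<Longrightarrow> fst p + 2 \<le> k \<Longrightarrow> fst q \<le> fst p + 1 \<and> fst p \<le> fst q + 1"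
  unfolding torus_adj_def grid_nodes_def
  by (cases p, cases q) (auto, (metis Suc_eq_plus1 le_SucI le_refl mod_less mod_self not_less_eq_eq Suc_lessI)+)

lemma cyl_rows: "cyl_adj k p q \<Longrightarrow> fst q \<le> fst p + 1 \<and> fst p \<le> fst q + 1"
  unfolding cyl_adj_def grid_nodes_def by auto




lemma ball_rows:
  assumes A1: "\<And>p q. E p q \<Longrightarrow> q \<in> grid_nodes k"
    and A3: "\<And>p q. E p q \<Longrightarrow> 1 \<le> fst p \<Longrightarrow> fst p + 2 \<le> k \<Longrightarrow> fst q \<le> fst p + 1 \<and> fst p \<le> fst q + 1"
    and v: "v \<in> grid_nodes k"
  shows "t \<le> fst v \<Longrightarrow> fst v + t + 1 \<le> k \<Longrightarrow> x \<in> ball E v t \<Longrightarrow>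
           x \<in> grid_nodes k \<and> fst v \<le> fst x + t \<and> fst x \<le> fst v + t"
proof (induction t arbitrary: x)
  case 0 then show ?case using v by simp
next
  case (Suc t)
  from Suc.prems(3) have "x \<in> ball E v t \<or> (\<exists>y\<in>ball E v t. E y x)" by auto
  then show ?case
  proof
    assume "x \<in> ball E v t" then show ?thesis using Suc by fastforce
  next
    assume "\<exists>y\<in>ball E v t. E y x"
    then obtain y where y: "y \<in> ball E v t" "E y x" by blast
    have yb: "fst v \<le> fst y + t \<and> fst y \<le> fst v + t" using Suc y by fastforce
    have "fst x \<le> fst y + 1 \<and> fst y \<le> fst x + 1"
      by (rule A3[OF y(2)]) (use yb Suc.prems in auto)
    then show ?thesis using yb A1[OF y(2)] by auto
  qed
qed

lemma ball_map:
  assumes inv: "\<And>x. \<psi> (\<psi> x) = x"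
    and pres: "\<And>s x y. s < t \<Longrightarrow> x \<in> ball E v s \<Longrightarrow> E (\<psi> x) (\<psi> y) = E x y"
  shows "s \<le> t \<Longrightarrow> ball E (\<psi> v) s = \<psi> ` ball E v s"
proof (induction s)
  case 0 then show ?case by simp
next
  case (Suc s)
  have IH: "ball E (\<psi> v) s = \<psi> ` ball E v s" using Suc by simp
  have P: "\<And>x y. x \<in> ball E v s \<Longrightarrow> E (\<psi> x) (\<psi> y) = E x y" using pres[of s] Suc.prems by simp
  have "{y. \<exists>x\<in>\<psi> ` ball E v s. E x y} = \<psi> ` {y. \<exists>x\<in>ball E v s. E x y}"
  proof (intro set_eqI iffI)
    fix y assume "y \<in> {y. \<exists>x\<in>\<psi> ` ball E v s. E x y}"
    then obtain x where x: "x \<in> ball E v s" "E (\<psi> x) y" by blast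
    then have "E x (\<psi> y)" using P[of x "\<psi> y"] inv by simp
    then have "\<psi> y \<in> {y. \<exists>x\<in>ball E v s. E x y}" using x by blast
    then show "y \<in> \<psi> ` {y. \<exists>x\<in>ball E v s. E x y}" using inv by (metis image_eqI)
  next
    fix y assume "y \<in> \<psi> ` {y. \<exists>x\<in>ball E v s. E x y}"
    then obtain y' x where y: "y = \<psi> y'" "x \<in> ball E v s" "E x y'" by blast
    then have "E (\<psi> x) y" using P by simp
    then show "y \<in> {y. \<exists>x\<in>\<psi> ` ball E v s. E x y}" using y by blast
  qed
  then show ?case using IH by (simp add: image_Un)
qed

lemma view_psi:
  assumes inv: "\<And>x. \<psi> (\<psi> x) = x"
    and balls: "\<And>v. v \<in> set vs \<Longrightarrow> ball E (\<psi> v) T = \<psi> ` ball E v T"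
    and pres: "\<And>x y. x \<in> (\<Union>v\<in>set vs. ball E v T) \<Longrightarrow> E (\<psi> x) (\<psi> y) = E x y"
  shows "view E (idf \<circ> \<psi>) T (map \<psi> vs) = view E idf T vs"
proof -
  let ?U = "\<Union>v\<in>set vs. ball E v T"
  have U: "(\<Union>v\<in>set (map \<psi> vs). ball E v T) = \<psi> ` ?U"
    using balls by (auto simp: image_UN)
  have m: "map (idf \<circ> \<psi>) (map \<psi> vs) = map idf vs" by (simp add: inv)
  have i: "(idf \<circ> \<psi>) ` (\<psi> ` ?U) = idf ` ?U" by (simp add: image_comp comp_def inv)
  have e: "{((idf \<circ> \<psi>) x, (idf \<circ> \<psi>) y) | x y. x \<in> \<psi> ` ?U \<and> y \<in> \<psi> ` ?U \<and> E x y}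
        = {(idf x, idf y) | x y. x \<in> ?U \<and> y \<in> ?U \<and> E x y}"
  proof (intro set_eqI iffI)
    fix z assume "z \<in> {((idf \<circ> \<psi>) x, (idf \<circ> \<psi>) y) | x y. x \<in> \<psi> ` ?U \<and> y \<in> \<psi> ` ?U \<and> E x y}"
    then obtain x' y' where xy: "z = ((idf \<circ> \<psi>) x', (idf \<circ> \<psi>) y')" "x' \<in> \<psi> ` ?U" "y' \<in> \<psi> ` ?U" "E x' y'"
      by blast
    then obtain a b where ab0: "x' = \<psi> a" "a \<in> ?U" "y' = \<psi> b" "b \<in> ?U" by blast
    have ab: "z = (idf a, idf b)" "a \<in> ?U" "b \<in> ?U" "E (\<psi> a) (\<psi> b)"
      using xy ab0 inv by auto
    then have "E a b" using pres by blast
    then show "z \<in> {(idf x, idf y) | x y. x \<in> ?U \<and> y \<in> ?U \<and> E x y}" using ab by blast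
  next
    fix z assume "z \<in> {(idf x, idf y) | x y. x \<in> ?U \<and> y \<in> ?U \<and> E x y}"
    then obtain a b where ab: "z = (idf a, idf b)" "a \<in> ?U" "b \<in> ?U" "E a b" by blast
    then have "E (\<psi> a) (\<psi> b)" using pres by blast
    moreover have "z = ((idf \<circ> \<psi>) (\<psi> a), (idf \<circ> \<psi>) (\<psi> b))" using ab inv by simp
    ultimately show "z \<in> {((idf \<circ> \<psi>) x, (idf \<circ> \<psi>) y) | x y. x \<in> \<psi> ` ?U \<and> y \<in> \<psi> ` ?U \<and> E x y}"
      using ab by blast
  qed
  show ?thesis unfolding view_def Let_def U m i e ..
qed

lemma psi_pres:
  assumes A2: "\<And>p q. E (rho k p) (rho k q) = E p q"
    and A3: "\<And>p q. E p q \<Longrightarrow> 1 \<le> fst p \<Longrightarrow> fst p + 2 \<le> k \<Longrightarrow> fst q \<le> fst p + 1 \<and> fst p \<le> fst q + 1"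
    and x: "(1 \<le> fst x \<and> fst x \<le> 2*T+1 \<and> fst x + 2 \<le> k) \<or> (2*T+4 \<le> fst x \<and> fst x + 2 \<le> k)"
  shows "E (psi k T x) (psi k T y) = E x y"
  using x
proof
  assume xl: "1 \<le> fst x \<and> fst x \<le> 2*T+1 \<and> fst x + 2 \<le> k"
  then have px: "psi k T x = x" by (simp add: psi_def)
  show ?thesis
  proof
    assume "E (psi k T x) (psi k T y)"
    then have h: "E x (psi k T y)" using px by simp
    have "fst (psi k T y) \<le> fst x + 1" using A3[OF h] xl by auto
    then have "psi k T y = y" using xl by (auto simp: psi_def split: if_splits)
    then show "E x y" using h by simp
  next
    assume h: "E x y"
    have "fst y \<le> fst x + 1" using A3[OF h] xl by auto
    then have "psi k T y = y" using xl by (auto simp: psi_def split: if_splits)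
    then show "E (psi k T x) (psi k T y)" using h px by simp
  qed
next
  assume xh: "2*T+4 \<le> fst x \<and> fst x + 2 \<le> k"
  then have px: "psi k T x = rho k x" by (simp add: psi_def)
  show ?thesis
  proof
    assume "E (psi k T x) (psi k T y)"
    then have h: "E (rho k x) (psi k T y)" using px by simp
    have "fst x \<le> fst (psi k T y) + 1" using A3[OF h] xh by auto
    then have "psi k T y = rho k y" using xh by (auto simp: psi_def split: if_splits)
    then show "E x y" using h A2 by simp
  next
    assume h: "E x y"
    have "fst x \<le> fst y + 1" using A3[OF h] xh by auto
    then have "psi k T y = rho k y" using xh by (auto simp: psi_def split: if_splits)
    then show "E (psi k T x) (psi k T y)" using h px A2 by simp
  qed
qed




lemma RS_cong: "(\<And>j. j < k \<Longrightarrow> g j = g' j) \<Longrightarrow> RS k g = RS k g'"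
  unfolding RS_def
proof (rule sum.cong[OF refl])
  fix x assume h: "\<And>j. j < k \<Longrightarrow> g j = g' j" and "x \<in> {..<k}"
  then have "x < k" "(x+1) mod k < k" by auto
  then show "dl (g x) (g ((x + 1) mod k)) = dl (g' x) (g' ((x + 1) mod k))" using h by simp
qed

lemma rmod: "(j::nat) < k \<Longrightarrow> (k - (k - j) mod k) mod k = j"
  by (cases "j = 0") auto

lemma col_fun:
  assumes "distinct \<sigma>" "set \<sigma> = V" "\<And>i. i < length \<sigma> \<Longrightarrow> c i < (3::nat)"
    "\<And>i j. i < length \<sigma> \<Longrightarrow> j < length \<sigma> \<Longrightarrow> E (\<sigma> ! i) (\<sigma> ! j) \<Longrightarrow> c i \<noteq> c j"
  shows "\<exists>f. (\<forall>i<length \<sigma>. f (\<sigma> ! i) = c i) \<and> (\<forall>p\<in>V. f p < 3) \<and>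
             (\<forall>p\<in>V. \<forall>q\<in>V. E p q \<longrightarrow> f p \<noteq> f q)"
proof -
  define ix where "ix p = (THE i. i < length \<sigma> \<and> \<sigma> ! i = p)" for p
  have ixs: "i < length \<sigma> \<Longrightarrow> ix (\<sigma> ! i) = i" for i
    unfolding ix_def using assms(1) by (auto simp: nth_eq_iff_index_eq)
  have ixV: "p \<in> V \<Longrightarrow> ix p < length \<sigma> \<and> \<sigma> ! ix p = p" for p
    using assms(2) by (metis in_set_conv_nth ixs)
  show ?thesis
    by (rule exI[of _ "\<lambda>p. c (ix p)"]) (use ixs ixV assms(3,4) in metis)
qed

lemma main_generic:
  fixes E :: "nat \<times> nat \<Rightarrow> nat \<times> nat \<Rightarrow> bool"
  assumes kodd: "odd k" and kbig: "4*T+6 \<le> k" and N: "k^2 \<le> N"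
    and A1: "\<And>p q. E p q \<Longrightarrow> p \<in> grid_nodes k \<and> q \<in> grid_nodes k"
    and A2: "\<And>p q. E (rho k p) (rho k q) = E p q"
    and A3: "\<And>p q. E p q \<Longrightarrow> 1 \<le> fst p \<Longrightarrow> fst p + 2 \<le> k \<Longrightarrow> fst q \<le> fst p + 1 \<and> fst p \<le> fst q + 1"
    and A5h: "\<And>i j. i < k \<Longrightarrow> j < k \<Longrightarrow> E (i,j) (i, Suc j mod k)"
    and A5v: "\<And>i j. Suc i < k \<Longrightarrow> j < k \<Longrightarrow> E (i,j) (Suc i, j)"
    and sol: "online_3col_solves (grid_nodes k) E N T A"
  shows False
proof -
  define V where "V = grid_nodes k"
  define h1 where "h1 = T + 1"
  define h2 where "h2 = 3*T + 4"
  define rowl where "rowl h = map (\<lambda>j. (h::nat, j)) [0..<k]" for h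
  define rest where "rest = filter (\<lambda>p. fst p \<noteq> h1 \<and> fst p \<noteq> h2) (List.product [0..<k] [0..<k])"
  define \<sigma>1 where "\<sigma>1 = rowl h1 @ rowl h2 @ rest"
  define idf1 where "idf1 p = fst p * k + snd p + 1" for p :: "nat \<times> nat"
  define \<psi> where "\<psi> = psi k T"
  define \<sigma>2 where "\<sigma>2 = map \<psi> \<sigma>1"
  define idf2 where "idf2 = idf1 \<circ> \<psi>"
  have k0: "0 < k" using kbig by simp
  have inv: "\<And>x. \<psi> (\<psi> x) = x" unfolding \<psi>_def by simp
  have injpsi: "inj \<psi>" by (metis inv injI)
  have psiV: "\<psi> ` V = V"
  proof -
    have "p \<in> V \<Longrightarrow> \<psi> p \<in> V" for p
      unfolding V_def \<psi>_def psi_def rho_def grid_nodes_def by (cases p) auto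
    then show ?thesis using inv by (metis image_eqI subsetI subset_antisym image_subset_iff)
  qed
  have rowl_len[simp]: "length (rowl h) = k" for h by (simp add: rowl_def)
  have rowl_nth: "j < k \<Longrightarrow> rowl h ! j = (h, j)" for h j by (simp add: rowl_def)
  have setrowl: "set (rowl h) = {(h, j) | j. j < k}" for h by (auto simp: rowl_def)
  have h12: "h1 < k" "h2 < k" "h1 \<noteq> h2" using kbig by (auto simp: h1_def h2_def)
  have dist1: "distinct \<sigma>1"
    unfolding \<sigma>1_def rest_def using h12
    by (auto simp: rowl_def distinct_map inj_on_def distinct_product)
  have set1: "set \<sigma>1 = V"
    unfolding \<sigma>1_def rest_def V_def grid_nodes_def using h12 by (auto simp: setrowl)
  have dist2: "distinct \<sigma>2" unfolding \<sigma>2_def using dist1 injpsi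
    by (simp add: distinct_map inj_on_subset[OF injpsi])
  have set2: "set \<sigma>2 = V" unfolding \<sigma>2_def using set1 psiV by simp
  have inj1: "inj_on idf1 V"
  proof (rule inj_onI)
    fix p q assume pq: "p \<in> V" "q \<in> V" "idf1 p = idf1 q"
    then have "(fst p * k + snd p) div k = (fst q * k + snd q) div k"
          "(fst p * k + snd p) mod k = (fst q * k + snd q) mod k" by (auto simp: idf1_def)
    then show "p = q" using pq(1,2) by (auto simp: V_def grid_nodes_def prod_eq_iff)
  qed
  have rng1: "idf1 ` V \<subseteq> {1..N}"
  proof
    fix z assume "z \<in> idf1 ` V"
    then obtain p where p: "p \<in> V" "z = idf1 p" by blast
    have "fst p + 1 \<le> k" "snd p < k" using p by (auto simp: V_def grid_nodes_def)
    then have "(fst p + 1) * k \<le> k * k" by (intro mult_le_mono1) simp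
    then have "z \<le> k^2" using p \<open>snd p < k\<close> by (simp add: idf1_def power2_eq_square algebra_simps)
    then show "z \<in> {1..N}" using N p by (simp add: idf1_def)
  qed
  have inj2: "inj_on idf2 V" unfolding idf2_def
    by (rule comp_inj_on[OF inj_on_subset[OF injpsi subset_UNIV]]) (simp add: psiV inj1)
  have "idf2 ` V = idf1 ` V" unfolding idf2_def by (metis image_comp psiV)
  then have rng2: "idf2 ` V \<subseteq> {1..N}" using rng1 by simp
  define col1 where "col1 i = A (view E idf1 T (take (Suc i) \<sigma>1))" for i
  define col2 where "col2 i = A (view E idf2 T (take (Suc i) \<sigma>2))" for i
  have S1: "(\<forall>i<length \<sigma>1. col1 i < 3) \<and> (\<forall>i<length \<sigma>1. \<forall>j<length \<sigma>1. E (\<sigma>1 ! i) (\<sigma>1 ! j) \<longrightarrow> col1 i \<noteq> col1 j)"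
    using sol dist1 set1 inj1 rng1 unfolding online_3col_solves_def V_def col1_def Let_def by blast
  have S2: "(\<forall>i<length \<sigma>2. col2 i < 3) \<and> (\<forall>i<length \<sigma>2. \<forall>j<length \<sigma>2. E (\<sigma>2 ! i) (\<sigma>2 ! j) \<longrightarrow> col2 i \<noteq> col2 j)"
    using sol dist2 set2 inj2 rng2 unfolding online_3col_solves_def V_def col2_def Let_def by blast
  obtain f1 where f1: "\<forall>i<length \<sigma>1. f1 (\<sigma>1 ! i) = col1 i" "\<forall>p\<in>V. f1 p < 3" "\<forall>p\<in>V. \<forall>q\<in>V. E p q \<longrightarrow> f1 p \<noteq> f1 q"
    using col_fun[OF dist1 set1, of col1 E] S1 by blast
  obtain f2 where f2: "\<forall>i<length \<sigma>2. f2 (\<sigma>2 ! i) = col2 i" "\<forall>p\<in>V. f2 p < 3" "\<forall>p\<in>V. \<forall>q\<in>V. E p q \<longrightarrow> f2 p \<noteq> f2 q"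
    using col_fun[OF dist2 set2, of col2 E] S2 by blast
  have len1: "2 * k \<le> length \<sigma>1" by (simp add: \<sigma>1_def)
  have nth1a: "j < k \<Longrightarrow> \<sigma>1 ! j = (h1, j)" for j by (simp add: \<sigma>1_def nth_append rowl_nth)
  have nth1b: "j < k \<Longrightarrow> \<sigma>1 ! (k + j) = (h2, j)" for j by (simp add: \<sigma>1_def nth_append rowl_nth)
  have R: "\<And>v s x. v \<in> set (rowl h1 @ rowl h2) \<Longrightarrow> s \<le> T \<Longrightarrow> x \<in> ball E v s \<Longrightarrow>
       (1 \<le> fst x \<and> fst x \<le> 2*T+1 \<and> fst x + 2 \<le> k) \<or> (2*T+4 \<le> fst x \<and> fst x + 2 \<le> k)"
  proof -
    fix v s x assume v: "v \<in> set (rowl h1 @ rowl h2)" and s: "s \<le> T" and x: "x \<in> ball E v s"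
    have vg: "v \<in> grid_nodes k" and vr: "fst v = h1 \<or> fst v = h2"
      using v h12 by (auto simp: setrowl grid_nodes_def)
    have "s \<le> fst v" "fst v + s + 1 \<le> k" using vr s kbig by (auto simp: h1_def h2_def)
    from ball_rows[of E k v, OF _ _ vg this x] A1 A3
    have "fst v \<le> fst x + s \<and> fst x \<le> fst v + s" by blast
    then show "(1 \<le> fst x \<and> fst x \<le> 2*T+1 \<and> fst x + 2 \<le> k) \<or> (2*T+4 \<le> fst x \<and> fst x + 2 \<le> k)"
      using vr s kbig by (auto simp: h1_def h2_def)
  qed
  have viewsame: "view E idf2 T (take n \<sigma>2) = view E idf1 T (take n \<sigma>1)" if n: "n \<le> 2*k" for n
  proof -
    have sub: "set (take n \<sigma>1) \<subseteq> set (rowl h1 @ rowl h2)"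
      unfolding \<sigma>1_def using n by (metis append_assoc length_append rowl_len mult_2 set_take_subset take_append
        diff_is_0_eq take_0 append_Nil2 )
    show ?thesis unfolding \<sigma>2_def take_map idf2_def
    proof (rule view_psi[OF inv])
      fix v assume "v \<in> set (take n \<sigma>1)"
      then have v: "v \<in> set (rowl h1 @ rowl h2)" using sub by blast
      have P: "E (\<psi> x) (\<psi> y) = E x y" if "s < T" "x \<in> ball E v s" for s x y
      proof -
        have "(1 \<le> fst x \<and> fst x \<le> 2*T+1 \<and> fst x + 2 \<le> k) \<or> (2*T+4 \<le> fst x \<and> fst x + 2 \<le> k)"
          using R[OF v, of s x] that by simp
        then show ?thesis unfolding \<psi>_def using psi_pres[where E=E and k=k and T=T, OF A2 A3] by blast
      qed
      show "ball E (\<psi> v) T = \<psi> ` ball E v T"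
        by (rule ball_map[where \<psi>=\<psi> and E=E and v=v and t=T and s=T, OF inv P order_refl])
    next
      fix x y assume "x \<in> (\<Union>v\<in>set (take n \<sigma>1). ball E v T)"
      then obtain v where "v \<in> set (take n \<sigma>1)" "x \<in> ball E v T" by blast
      then show "E (\<psi> x) (\<psi> y) = E x y" using R[of v T x] sub psi_pres[where E=E and k=k and T=T, OF A2 A3] unfolding \<psi>_def by blast
    qed
  qed
  have colsame: "i < 2*k \<Longrightarrow> col2 i = col1 i" for i
    unfolding col1_def col2_def using viewsame[of "Suc i"] by simp
  have F1a: "f1 (h1, j) = col1 j" if j: "j < k" for j
  proof -
    have "j < length \<sigma>1" using j len1 by simp
    then show ?thesis using f1(1) nth1a[OF j] by metis
  qed
  have F1b: "f1 (h2, j) = col1 (k + j)" if j: "j < k" for j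
  proof -
    have "k + j < length \<sigma>1" using j len1 by simp
    then show ?thesis using f1(1) nth1b[OF j] by metis
  qed
  have F2a: "j < k \<Longrightarrow> f2 (h1, j) = col1 j" for j
  proof -
    assume j: "j < k"
    have "\<sigma>2 ! j = (h1, j)" using j len1 nth1a by (simp add: \<sigma>2_def \<psi>_def psi_def h1_def)
    moreover have "j < length \<sigma>2" using j len1 by (simp add: \<sigma>2_def)
    moreover have "col2 j = col1 j" using colsame[of j] j by simp
    ultimately show ?thesis using f2(1) by metis
  qed
  have F2b: "j < k \<Longrightarrow> f2 (h2, j) = col1 (k + (k - j) mod k)" for j
  proof -
    assume j: "j < k"
    define j' where "j' = (k - j) mod k"
    have j': "j' < k" using k0 by (simp add: j'_def)
    have "\<sigma>2 ! (k + j') = \<psi> (\<sigma>1 ! (k + j'))" using j' len1 by (simp add: \<sigma>2_def)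
    also have "\<dots> = \<psi> (h2, j')" using nth1b[OF j'] by simp
    also have "\<dots> = (h2, (k - j') mod k)" using j' by (simp add: \<psi>_def psi_def h2_def rho_def)
    also have "(k - j') mod k = j" unfolding j'_def using j by (rule rmod)
    finally have "\<sigma>2 ! (k + j') = (h2, j)" .
    moreover have "k + j' < length \<sigma>2" using j' len1 by (simp add: \<sigma>2_def)
    moreover have "col2 (k + j') = col1 (k + j')" using colsame[of "k + j'"] j' by simp
    ultimately show ?thesis using f2(1) unfolding j'_def by metis
  qed
  have rowsum: "RS k (\<lambda>j. f (h1, j)) = RS k (\<lambda>j. f (h2, j))"
    if f3: "\<forall>p\<in>V. f p < 3" and fp: "\<forall>p\<in>V. \<forall>q\<in>V. E p q \<longrightarrow> f p \<noteq> f q" for f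
  proof -
    have a: "\<And>i j. i < k \<Longrightarrow> j < k \<Longrightarrow> f (i,j) < 3" using f3 by (simp add: V_def grid_nodes_def)
    have b: "\<And>i j. i < k \<Longrightarrow> j < k \<Longrightarrow> f (i,j) \<noteq> f (i, Suc j mod k)"
      using fp A5h A1 unfolding V_def by blast
    have c: "\<And>i j. i + 1 < k \<Longrightarrow> j < k \<Longrightarrow> f (i,j) \<noteq> f (i+1,j)"
      using fp A5v A1 unfolding V_def by (metis Suc_eq_plus1)
    show ?thesis using rs_rows[where f=f and k=k, OF k0 a b c, of h1] rs_rows[where f=f and k=k, OF k0 a b c, of h2] h12 by simp
  qed
  define g where "g j = col1 (k + j)" for j
  have X1: "RS k (\<lambda>j. col1 j) = RS k g"
    using rowsum[OF f1(2,3)] by (metis (no_types, lifting) F1a F1b RS_cong g_def)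
  have X2: "RS k (\<lambda>j. col1 j) = RS k (\<lambda>j. g ((k - j) mod k))"
    using rowsum[OF f2(2,3)] by (metis (no_types, lifting) F2a F2b RS_cong g_def)
  have g3: "\<And>j. j < k \<Longrightarrow> g j < 3" using f1(2) F1b h12 by (auto simp: g_def V_def grid_nodes_def)
  have gn: "\<And>j. j < k \<Longrightarrow> g j \<noteq> g (Suc j mod k)"
  proof -
    fix j assume j: "j < k"
    have "E (h2, j) (h2, Suc j mod k)" using A5h h12 j by blast
    then have "f1 (h2, j) \<noteq> f1 (h2, Suc j mod k)" using f1(3) A1 unfolding V_def by blast
    then show "g j \<noteq> g (Suc j mod k)" using F1b j k0 by (simp add: g_def)
  qed
  have "RS k g = - RS k g" using X1 X2 rs_rev[where g=g and k=k, OF k0 g3 gn] by simp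
  then have "RS k g = 0" by simp
  then show False using rs_nz[OF kodd] by blast
qed




lemma torus_A1: "torus_adj k p q \<Longrightarrow> p \<in> grid_nodes k \<and> q \<in> grid_nodes k"
  by (simp add: torus_adj_def)
lemma cyl_A1: "cyl_adj k p q \<Longrightarrow> p \<in> grid_nodes k \<and> q \<in> grid_nodes k"
  by (simp add: cyl_adj_def)

lemma torus_h: "3 \<le> k \<Longrightarrow> i < k \<Longrightarrow> j < k \<Longrightarrow> torus_adj k (i,j) (i, Suc j mod k)"
  unfolding torus_adj_def grid_nodes_def by (cases "Suc j = k") auto
lemma cyl_h: "3 \<le> k \<Longrightarrow> i < k \<Longrightarrow> j < k \<Longrightarrow> cyl_adj k (i,j) (i, Suc j mod k)"
  unfolding cyl_adj_def grid_nodes_def by (cases "Suc j = k") auto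
lemma torus_v: "Suc i < k \<Longrightarrow> j < k \<Longrightarrow> torus_adj k (i,j) (Suc i, j)"
  unfolding torus_adj_def grid_nodes_def by auto
lemma cyl_v: "Suc i < k \<Longrightarrow> j < k \<Longrightarrow> cyl_adj k (i,j) (Suc i, j)"
  unfolding cyl_adj_def grid_nodes_def by auto

theorem theorem2:
  fixes d :: nat
  assumes "d \<ge> 1"
  shows "\<exists>c::real>0. \<exists>n0::nat. \<forall>n k T A. n \<ge> n0 \<and> n = k ^ 2 \<and> odd k \<longrightarrow>
           (online_3col_solves (grid_nodes k) (torus_adj k) (n ^ d) T A \<longrightarrow> real T \<ge> c * sqrt (real n)) \<and>
           (online_3col_solves (grid_nodes k) (cyl_adj k) (n ^ d) T A \<longrightarrow> real T \<ge> c * sqrt (real n))"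
proof (intro exI[of _ "1/8::real"] conjI exI[of _ "144::nat"] allI impI)
  show "(0::real) < 1/8" by simp
next
  fix n k T :: nat and A
  assume H: "144 \<le> n \<and> n = k ^ 2 \<and> odd k"
  have k12: "12 \<le> k"
  proof (rule ccontr)
    assume "\<not> 12 \<le> k"
    then have "k \<le> 11" by simp
    then have "k * k \<le> 11 * 11" by (intro mult_le_mono) auto
    then show False using H by (simp add: power2_eq_square)
  qed
  have sq: "sqrt (real n) = real k" using H by simp
  have N: "k^2 \<le> n ^ d"
  proof -
    have "n ^ 1 \<le> n ^ d" using assms H by (intro power_increasing) auto
    then show ?thesis using H by simp
  qed
  have key: "4*T+6 \<le> k" if "\<not> real T \<ge> 1/8 * sqrt (real n)"
  proof -
    have "real (8*T) < real k" using that sq by simp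
    then have "8*T < k" by linarith
    then show ?thesis using k12 by simp
  qed
  show "online_3col_solves (grid_nodes k) (torus_adj k) (n ^ d) T A \<Longrightarrow> 1/8 * sqrt (real n) \<le> real T"
  proof (rule ccontr)
    assume sol: "online_3col_solves (grid_nodes k) (torus_adj k) (n ^ d) T A"
      and "\<not> 1/8 * sqrt (real n) \<le> real T"
    then have kb: "4*T+6 \<le> k" using key by blast
    show False
      by (rule main_generic[where E="torus_adj k" and k=k and T=T and N="n^d" and A=A,
            OF _ kb N torus_A1 torus_rho torus_rows torus_h torus_v sol])
         (use H k12 in auto)
  qed
  show "online_3col_solves (grid_nodes k) (cyl_adj k) (n ^ d) T A \<Longrightarrow> 1/8 * sqrt (real n) \<le> real T"
  proof (rule ccontr)
    assume sol: "online_3col_solves (grid_nodes k) (cyl_adj k) (n ^ d) T A"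
      and "\<not> 1/8 * sqrt (real n) \<le> real T"
    then have kb: "4*T+6 \<le> k" using key by blast
    show False
      by (rule main_generic[where E="cyl_adj k" and k=k and T=T and N="n^d" and A=A,
            OF _ kb N cyl_A1 cyl_rho _ cyl_h cyl_v sol])
         (use H k12 cyl_rows in auto)
  qed
qed


end
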